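(* Let $n$ and $b$ be odd positive integers with $n\nmid b$, let $m$ be an even positive integer, and let $q=\gcd(n,b)$. Then $b+m$ and $b-m$ do not both lie in the interval $(n-q,n+q)$ modulo $2n$.
   Context: An integer $x$ lies in the interval $(n-q,n+q)$ modulo $2n$ if some integer congruent to $x$ modulo $2n$ lies in that open real interval. *)

theory Defs
  imports Main
begin

definition in_interval_mod :: "int \<Rightarrow> int \<Rightarrow> int \<Rightarrow> int \<Rightarrow> bool" where
  "in_interval_mod M a b x \<longleftrightarrow> (\<exists>y::int. y mod M = x mod M \<and> a < y \<and> y < b)"

end

theory Submission
  imports Defs
begin

theorem lemma12:
  fixes n b m :: int
  assumes "n > 0" "odd n" "b > 0" "odd b" "\<not> n dvd b" "m > 0" "even m"
  shows "\<not> (in_interval_mod (2*n) (n - gcd n b) (n + gcd n b) (b + m) \<and>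
             in_interval_mod (2*n) (n - gcd n b) (n + gcd n b) (b - m))"
proof
  let ?q = "gcd n b"
  assume H: "in_interval_mod (2*n) (n - ?q) (n + ?q) (b + m) \<and>
             in_interval_mod (2*n) (n - ?q) (n + ?q) (b - m)"
  then obtain y1 y2 where y1: "y1 mod (2*n) = (b+m) mod (2*n)" "n - ?q < y1" "y1 < n + ?q"
    and y2: "y2 mod (2*n) = (b-m) mod (2*n)" "n - ?q < y2" "y2 < n + ?q"
    unfolding in_interval_mod_def by blast
  have "(2*n) dvd (y1 - (b+m))" using y1(1) by (simp add: mod_eq_dvd_iff)
  moreover have "(2*n) dvd (y2 - (b-m))" using y2(1) by (simp add: mod_eq_dvd_iff)
  ultimately have "(2*n) dvd (y1 + y2 - 2*b)"
    using dvd_add by fastforce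
  then obtain k where k: "y1 + y2 - 2*b = 2*n*k" by (auto elim: dvdE)
  define s where "s = b + n*k"
  have s2: "y1 + y2 = 2*s" using k s_def by (simp add: algebra_simps)
  have qs: "?q dvd s - n" unfolding s_def
    by (simp add: dvd_diff dvd_add dvd_mult2)
  have "s - n < ?q" "-?q < s - n" using s2 y1 y2 by linarith+
  then have "s - n = 0"
  proof -
    obtain t where t: "s - n = ?q * t" using qs by (auto elim: dvdE)
    have qp: "?q > 0" using assms(1) by simp
    have "t < 1" using \<open>s - n < ?q\<close> t qp
      by (metis mult.right_neutral mult_less_cancel_left_pos not_le)
    moreover have "t > -1" using \<open>-?q < s - n\<close> t qp
      by (metis mult_minus1_right mult_less_cancel_left_pos)
    ultimately show ?thesis using t by simp
  qed
  then have "b = n * (1 - k)" using s_def by (simp add: algebra_simps)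
  then show False using assms(5) by simp
qed

end
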